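(* Let $f$ satisfy the standing assumptions below, and for $\xi,u_1\in(0,1)$ let $$F_0(\xi,u_1)=\frac{1}{2\sqrt2}\int_{-1}^{1}\frac{f'\!\left(\frac{1+\mu}{2}\xi+\frac{1-\mu}{2}u_1\right)}{\sqrt{1-\mu}}\,d\mu,\qquad U_0(\xi,u_1)=\frac43\xi+\frac23u_1 .$$ Then, for $u_1$ sufficiently close to $1$, the function $\xi\mapsto -F_0(\xi,u_1)/U_0(\xi,u_1)$ on $(0,1)$ (whose minimum over $0<\xi<1$ is considered) has one and only one critical point in $(0,1)$. Furthermore, this critical point tends to $1/4$ as $u_1\to1$.
   Context: Standing assumptions: $f:(0,1)\to\mathbb{R}$ is the inverse of a smooth strictly decreasing function $u_0:\mathbb{R}\to(0,1)$ with $u_0(-\infty)=1$, $u_0(+\infty)=0$; thus $f$ is smooth with $f'<0$, $\lim_{u\to0}f(u)=+\infty$, $\lim_{u\to1}f(u)=-\infty$; moreover $f'''(u)<0$ for $u$ in a neighborhood of $0$ and in a neighborhood of $1$. *)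

theory Defs
  imports "HOL-Analysis.Analysis"
begin

definition smooth_on :: "real set \<Rightarrow> (real \<Rightarrow> real) \<Rightarrow> bool" where
  "smooth_on S g \<longleftrightarrow> (\<forall>n. \<forall>x\<in>S. ((deriv ^^ n) g) differentiable (at x))"

definition F0 :: "(real \<Rightarrow> real) \<Rightarrow> real \<Rightarrow> real \<Rightarrow> real" where
  "F0 f \<xi> u1 = 1 / (2 * sqrt 2) *
     integral {-1..1} (\<lambda>\<mu>. deriv f ((1 + \<mu>) / 2 * \<xi> + (1 - \<mu>) / 2 * u1) / sqrt (1 - \<mu>))"

definition U0 :: "real \<Rightarrow> real \<Rightarrow> real" where
  "U0 \<xi> u1 = 4 / 3 * \<xi> + 2 / 3 * u1"

end

theory Submission
  imports Defs
begin


locale fs =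
  fixes f :: "real \<Rightarrow> real"
  assumes sm: "smooth_on {0<..<1} f"
  and fneg: "\<And>u. 0<u \<Longrightarrow> u<1 \<Longrightarrow> deriv f u < 0"
  and flim1: "filterlim f at_bot (at_left 1)"
  and f3n0: "\<exists>\<delta>>0. \<forall>u. 0 < u \<and> u < \<delta> \<longrightarrow> (deriv ^^ 3) f u < 0"
  and f3n1: "\<exists>\<delta>>0. \<forall>u. 1 - \<delta> < u \<and> u < 1 \<longrightarrow> (deriv ^^ 3) f u < 0"
begin

abbreviation "f1 \<equiv> deriv f"
abbreviation "f2 \<equiv> deriv f1"
abbreviation "f3 \<equiv> deriv f2"

lemma dif: "x \<in> {0<..<1} \<Longrightarrow> ((deriv ^^ n) f) differentiable (at x)"
  using sm unfolding smooth_on_def by blast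

lemma D0: "0 < x \<Longrightarrow> x < 1 \<Longrightarrow> (f has_real_derivative f1 x) (at x)"
  using dif[of x 0] by (simp add: DERIV_deriv_iff_real_differentiable)
lemma D1: "0 < x \<Longrightarrow> x < 1 \<Longrightarrow> (f1 has_real_derivative f2 x) (at x)"
  using dif[of x 1] by (simp add: DERIV_deriv_iff_real_differentiable)
lemma D2: "0 < x \<Longrightarrow> x < 1 \<Longrightarrow> (f2 has_real_derivative f3 x) (at x)"
  using dif[of x 2] by (simp add: DERIV_deriv_iff_real_differentiable numeral_2_eq_2)
lemma D3: "0 < x \<Longrightarrow> x < 1 \<Longrightarrow> f3 differentiable (at x)"
  using dif[of x 3] by (simp add: numeral_3_eq_3)

lemma C0: "continuous_on {0<..<1} f"
  using D0 by (meson DERIV_isCont continuous_at_imp_continuous_on greaterThanLessThan_iff)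
lemma C1: "continuous_on {0<..<1} f1"
  using D1 by (meson DERIV_isCont continuous_at_imp_continuous_on greaterThanLessThan_iff)
lemma C2: "continuous_on {0<..<1} f2"
  using D2 by (meson DERIV_isCont continuous_at_imp_continuous_on greaterThanLessThan_iff)
lemma C3: "continuous_on {0<..<1} f3"
  using D3 by (meson differentiable_imp_continuous_within continuous_at_imp_continuous_on greaterThanLessThan_iff)

lemma f3eq: "(deriv ^^ 3) f = f3" by (simp add: numeral_3_eq_3)

lemma a_in:
  fixes x u r :: real
  assumes "0<x" "x<1" "0<u" "u<1" "0\<le>r" "r\<le>1"
  shows "0 < x + r^2*(u-x) \<and> x + r^2*(u-x) < 1"
proof -
  have r2: "0 \<le> r^2" "r^2 \<le> 1" using assms by (auto simp: power_le_one)
  have e: "x + r^2*(u-x) = (1-r^2)*x + r^2*u" by (simp add: algebra_simps)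
  have "0 < (1-r^2)*x + r^2*u"
  proof (cases "r^2 = 0")
    case True then show ?thesis using assms by simp
  next
    case False then have "r^2 > 0" using r2 by simp
    then show ?thesis using assms r2 by (smt (verit) mult_nonneg_nonneg mult_pos_pos)
  qed
  moreover have "(1-r^2)*x + r^2*u < 1"
  proof (cases "r^2 = 1")
    case True then show ?thesis using assms by simp
  next
    case False then have "1 - r^2 > 0" using r2 by simp
    then have "(1-r^2)*x < (1-r^2)*1" using assms by (intro mult_strict_left_mono) auto
    moreover have "r^2*u \<le> r^2*1" using assms r2 by (intro mult_left_mono) auto
    ultimately show ?thesis by simp
  qed
  ultimately show ?thesis using e by simp
qed

end


lemma subst_sing:
  fixes g :: "real \<Rightarrow> real"
  assumes cg: "continuous_on {-1..1} g"
  shows "integral {-1..1} (\<lambda>\<mu>. g \<mu> / sqrt (1-\<mu>)) = 2 * sqrt 2 * integral {0..1} (\<lambda>r. g (1 - 2*r^2))"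
proof -
  define h where "h = (\<lambda>r::real. g (1 - 2*r^2))"
  define Q where "Q = (\<lambda>t. integral {0..t} h)"
  define s where "s = (\<lambda>\<mu>::real. sqrt ((1-\<mu>)/2))"
  define P where "P = (\<lambda>\<mu>. - 2 * sqrt 2 * Q (s \<mu>))"
  have ch: "continuous_on {0..1} h"
    unfolding h_def
    by (rule continuous_on_compose2[OF cg]) (auto intro!: continuous_intros simp: power_le_one)
  have dQ: "(Q has_real_derivative h t) (at t within {0..1})" if "t \<in> {0..1}" for t
    unfolding Q_def using integral_has_real_derivative[OF ch that] .
  have cQ: "continuous_on {0..1} Q"
    using dQ by (meson DERIV_continuous continuous_on_eq_continuous_within)
  have cs: "continuous_on {-1..1} s" unfolding s_def by (intro continuous_intros) simp_all
  have sin: "s \<mu> \<in> {0..1}" if "\<mu> \<in> {-1..1}" for \<mu>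
    using that unfolding s_def by (auto simp: real_sqrt_le_1_iff)
  have cP: "continuous_on {-1..1} P"
    unfolding P_def
    by (intro continuous_intros continuous_on_compose2[OF cQ cs]) (use sin in auto)
  have dP: "(P has_vector_derivative (g \<mu> / sqrt (1-\<mu>))) (at \<mu>)" if "\<mu> \<in> {-1<..<1}" for \<mu>
  proof -
    have sp: "0 < s \<mu>" "s \<mu> < 1" using that unfolding s_def by (auto simp: real_sqrt_lt_1_iff)
    have dQ': "(Q has_real_derivative h (s \<mu>)) (at (s \<mu>))"
    proof -
      have "(Q has_real_derivative h (s \<mu>)) (at (s \<mu>) within {0..1})" using dQ sp by auto
      moreover have "s \<mu> \<in> interior {0..1}" using sp by simp
      ultimately show ?thesis by (metis at_within_interior)
    qed
    have ds: "(s has_real_derivative (inverse (sqrt ((1-\<mu>)/2)) / 2 * (- 1/2))) (at \<mu>)"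
      unfolding s_def using that
      by (auto intro!: derivative_eq_intros)
    have "(P has_real_derivative (- 2 * sqrt 2 * (h (s \<mu>) * (inverse (sqrt ((1-\<mu>)/2)) / 2 * (- 1/2))))) (at \<mu>)"
      unfolding P_def by (intro DERIV_cmult DERIV_chain2[OF dQ' ds])
    moreover have "- 2 * sqrt 2 * (h (s \<mu>) * (inverse (sqrt ((1-\<mu>)/2)) / 2 * (- 1/2))) = g \<mu> / sqrt (1-\<mu>)"
    proof -
      have "1 - 2 * (s \<mu>)^2 = \<mu>" unfolding s_def using that by (simp add: field_simps)
      then have hs: "h (s \<mu>) = g \<mu>" unfolding h_def by simp
      define q where "q = sqrt (1-\<mu>)"
      define t where "t = sqrt (2::real)"
      have qp: "q > 0" using that unfolding q_def by simp
      have tp: "t > 0" "t * t = 2" unfolding t_def by auto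
      have e1: "sqrt ((1-\<mu>)/2) = q / t" unfolding q_def t_def by (rule real_sqrt_divide)
      have "- 2 * t * (g \<mu> * (inverse (q / t) / 2 * (- 1/2))) = g \<mu> * (t * t) / (2 * q)"
        using qp tp(1) by (simp add: field_simps)
      also have "\<dots> = g \<mu> / q" using tp(2) qp by simp
      finally show ?thesis using hs e1 unfolding q_def t_def by simp
    qed
    ultimately show ?thesis by (simp add: has_real_derivative_iff_has_vector_derivative)
  qed
  have "((\<lambda>\<mu>. g \<mu> / sqrt (1-\<mu>)) has_integral (P 1 - P (-1))) {-1..1}"
    by (rule fundamental_theorem_of_calculus_interior[OF _ cP dP]) auto
  moreover have "P 1 - P (-1) = 2 * sqrt 2 * integral {0..1} (\<lambda>r. g (1 - 2*r^2))"
    unfolding P_def Q_def s_def h_def by simp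
  ultimately show ?thesis by (simp add: integral_unique)
qed



lemma cc_in:
  fixes x u p :: real
  assumes "0<x" "x<1" "0<u" "u<1" "0\<le>p" "p\<le>1"
  shows "0 < p*x + (1-p)*u \<and> p*x + (1-p)*u < 1"
proof -
  have "0 < p*x + (1-p)*u"
  proof (cases "p = 0")
    case True then show ?thesis using assms by simp
  next
    case False then have "p > 0" using assms by simp
    then show ?thesis using assms by (smt (verit) mult_nonneg_nonneg mult_pos_pos)
  qed
  moreover have "p*x + (1-p)*u < 1"
  proof (cases "p = 1")
    case True then show ?thesis using assms by simp
  next
    case False then have "1 - p > 0" using assms by simp
    then have "(1-p)*u < (1-p)*1" using assms by (intro mult_strict_left_mono) auto
    moreover have "p*x \<le> p*1" using assms by (intro mult_left_mono) auto
    ultimately show ?thesis by simp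
  qed
  ultimately show ?thesis by simp
qed

lemma ain:
  fixes x u r :: real
  assumes "0<x" "x<1" "0<u" "u<1" "0\<le>r" "r\<le>1"
  shows "0 < x + r^2*(u-x) \<and> x + r^2*(u-x) < 1"
proof -
  have "0 \<le> 1 - r^2" "1 - r^2 \<le> 1" using assms by (auto simp: power_le_one)
  moreover have "x + r^2*(u-x) = (1-r^2)*x + (1-(1-r^2))*u" by (simp add: algebra_simps)
  ultimately show ?thesis using cc_in[OF assms(1-4), of "1-r^2"] by simp
qed

lemma cont2:
  fixes g :: "real \<Rightarrow> real"
  assumes g: "continuous_on {0<..<1} g" and u: "0<u" "u<1"
  shows "continuous_on ({0<..<1} \<times> {0..1}) (\<lambda>(x,t). g (x + t^2*(u-x)))"
proof -
  have "continuous_on ({0<..<1} \<times> {0..1}) (\<lambda>z::real\<times>real. fst z + (snd z)^2*(u - fst z))"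
    by (intro continuous_intros)
  moreover have "(\<lambda>z::real\<times>real. fst z + (snd z)^2*(u - fst z)) ` ({0<..<1} \<times> {0..1}) \<subseteq> {0<..<1}"
  proof
    fix y assume "y \<in> (\<lambda>z::real\<times>real. fst z + (snd z)^2*(u - fst z)) ` ({0<..<1} \<times> {0..1})"
    then obtain a b where ab: "a \<in> {0<..<1}" "b \<in> {0..1}" "y = a + b^2*(u-a)" by auto
    then show "y \<in> {0<..<1}" using ain[of a u b] u by auto
  qed
  ultimately have "continuous_on ({0<..<1} \<times> {0..1}) (\<lambda>z::real\<times>real. g (fst z + (snd z)^2*(u - fst z)))"
    by (rule continuous_on_compose2[OF g])
  then show ?thesis by (simp add: case_prod_beta)
qed

lemma cont1:
  fixes g :: "real \<Rightarrow> real"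
  assumes g: "continuous_on {0<..<1} g" and u: "0<u" "u<1" and x: "0<x" "x<1"
  shows "continuous_on {0..1} (\<lambda>t. g (x + t^2*(u-x)))"
proof -
  have "continuous_on {0..1} (\<lambda>t::real. x + t^2*(u-x))" by (intro continuous_intros)
  moreover have "(\<lambda>t::real. x + t^2*(u-x)) ` {0..1} \<subseteq> {0<..<1}"
  proof
    fix y assume "y \<in> (\<lambda>t::real. x + t^2*(u-x)) ` {0..1}"
    then obtain b where ab: "b \<in> {0..1}" "y = x + b^2*(u-x)" by auto
    then show "y \<in> {0<..<1}" using ain[of x u b] u x by auto
  qed
  ultimately show ?thesis by (rule continuous_on_compose2[OF g])
qed

context fs begin

lemma F0_eq:
  assumes x: "0<x" "x<1" and u: "0<u" "u<1"
  shows "F0 f x u = integral {0..1} (\<lambda>r. f1 (x + r^2*(u-x)))"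
proof -
  define g where "g = (\<lambda>\<mu>. f1 ((1 + \<mu>) / 2 * x + (1 - \<mu>) / 2 * u))"
  have "continuous_on {-1..1} (\<lambda>\<mu>::real. (1 + \<mu>) / 2 * x + (1 - \<mu>) / 2 * u)"
    by (intro continuous_intros) simp_all
  moreover have "(\<lambda>\<mu>::real. (1 + \<mu>) / 2 * x + (1 - \<mu>) / 2 * u) ` {-1..1} \<subseteq> {0<..<1}"
  proof
    fix y assume "y \<in> (\<lambda>\<mu>::real. (1 + \<mu>) / 2 * x + (1 - \<mu>) / 2 * u) ` {-1..1}"
    then obtain \<mu> where m: "\<mu> \<in> {-1..1}" "y = (1 + \<mu>) / 2 * x + (1 - \<mu>) / 2 * u" by auto
    have e: "(1 + \<mu>) / 2 * x + (1 - \<mu>) / 2 * u = (1+\<mu>)/2*x + (1 - (1+\<mu>)/2)*u" by (simp add: field_simps)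
    have "0 < y \<and> y < 1" using cc_in[OF x u, of "(1+\<mu>)/2"] m(1) unfolding m(2) e by auto
    then show "y \<in> {0<..<1}" by simp
  qed
  ultimately have cg: "continuous_on {-1..1} g"
    unfolding g_def by (rule continuous_on_compose2[OF C1])
  have "F0 f x u = 1 / (2 * sqrt 2) * integral {-1..1} (\<lambda>\<mu>. g \<mu> / sqrt (1-\<mu>))"
    unfolding F0_def g_def by simp
  also have "\<dots> = integral {0..1} (\<lambda>r. g (1 - 2*r^2))"
    using subst_sing[OF cg] by simp
  also have "\<dots> = integral {0..1} (\<lambda>r. f1 (x + r^2*(u-x)))"
  proof (rule integral_cong)
    fix r :: real
    have "(1 + (1 - 2 * r\<^sup>2)) / 2 * x + (1 - (1 - 2 * r\<^sup>2)) / 2 * u = x + r^2*(u-x)"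
      by (simp add: field_simps)
    then show "g (1 - 2 * r\<^sup>2) = f1 (x + r\<^sup>2 * (u - x))" unfolding g_def by simp
  qed
  finally show ?thesis .
qed

lemma leib:
  fixes g g' :: "real \<Rightarrow> real" and w :: "real \<Rightarrow> real"
  assumes dg: "\<And>y. 0<y \<Longrightarrow> y<1 \<Longrightarrow> (g has_real_derivative g' y) (at y)"
    and cg: "continuous_on {0<..<1} g" and cg': "continuous_on {0<..<1} g'"
    and cw: "continuous_on {0..1} w"
    and x: "0<x" "x<1" and u: "0<u" "u<1"
  shows "((\<lambda>x. integral {0..1} (\<lambda>r. w r * g (x + r^2*(u-x)))) has_real_derivative
           integral {0..1} (\<lambda>r. w r * (1 - r^2) * g' (x + r^2*(u-x)))) (at x)"
proof -
  have "((\<lambda>x. integral (cbox 0 1) (\<lambda>r. w r * g (x + r^2*(u-x)))) has_field_derivative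
           integral (cbox 0 1) (\<lambda>r. w r * (1 - r^2) * g' (x + r^2*(u-x)))) (at x within {0<..<1})"
  proof (rule leibniz_rule_field_derivative)
    fix y t :: real assume y: "y \<in> {0<..<1}" and t: "t \<in> cbox 0 1"
    have yy: "0 < y + t^2*(u-y) \<and> y + t^2*(u-y) < 1" using ain y t u by auto
    have di: "((\<lambda>y. y + t^2*(u-y)) has_real_derivative (1 - t^2)) (at y)"
      by (auto intro!: derivative_eq_intros)
    have "((\<lambda>y. w t * g (y + t^2*(u-y))) has_real_derivative w t * (g' (y + t^2*(u-y)) * (1 - t^2))) (at y)"
      by (intro DERIV_cmult DERIV_chain2[OF dg[OF yy[THEN conjunct1] yy[THEN conjunct2]] di])
    then show "((\<lambda>y. w t * g (y + t^2*(u-y))) has_real_derivative w t * (1 - t^2) * g' (y + t^2*(u-y))) (at y within {0<..<1})"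
      by (auto intro: has_field_derivative_at_within simp: algebra_simps)
  next
    fix y :: real assume y: "y \<in> {0<..<1}"
    show "(\<lambda>r. w r * g (y + r^2*(u-y))) integrable_on cbox 0 1"
      using y by (auto intro!: integrable_continuous_interval continuous_intros cw cont1[OF cg u])
  next
    have c: "continuous_on ({0<..<1} \<times> {0..1}) (\<lambda>(x,t). g' (x + t^2*(u-x)))"
      by (rule cont2[OF cg' u])
    have cw2: "continuous_on ({0<..<1} \<times> {0..1}) (\<lambda>z::real\<times>real. w (snd z))"
      by (rule continuous_on_compose2[OF cw]) (auto intro!: continuous_intros)
    have "continuous_on ({0<..<1} \<times> {0..1}) (\<lambda>z::real\<times>real. w (snd z) * (1 - (snd z)^2) * (\<lambda>(x,t). g' (x + t^2*(u-x))) z)"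
      by (intro continuous_intros cw2 c)
    then show "continuous_on ({0<..<1} \<times> cbox 0 1) (\<lambda>(x, t). w t * (1 - t^2) * g' (x + t^2*(u-x)))"
      by (simp add: case_prod_beta)
  qed (use x in auto)
  moreover have "at x within {0<..<1} = at x" using x by (intro at_within_open) auto
  ultimately show ?thesis by (simp only: box_real(2))
qed

end


context fs begin

definition "I0 x u = integral {0..1} (\<lambda>r. f1 (x + r^2*(u-x)))"
definition "I1 x u = integral {0..1} (\<lambda>r. (1-r^2) * f2 (x + r^2*(u-x)))"
definition "I2 x u = integral {0..1} (\<lambda>r. (1-r^2)^2 * f3 (x + r^2*(u-x)))"
definition "H x u = U0 x u * I1 x u - 4/3 * I0 x u"

lemma dI0:
  assumes x: "0<x" "x<1" and u: "0<u" "u<1"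
  shows "((\<lambda>x. I0 x u) has_real_derivative I1 x u) (at x)"
  using leib[OF D1 C1 C2 continuous_on_const x u, of 1] unfolding I0_def I1_def by simp

lemma dI1:
  assumes x: "0<x" "x<1" and u: "0<u" "u<1"
  shows "((\<lambda>x. I1 x u) has_real_derivative I2 x u) (at x)"
proof -
  have cw: "continuous_on {0..1} (\<lambda>r::real. 1 - r^2)" by (intro continuous_intros)
  show ?thesis
    using leib[OF D2 C2 C3 cw x u] unfolding I1_def I2_def by (simp add: power2_eq_square mult.assoc)
qed

lemma dH:
  assumes x: "0<x" "x<1" and u: "0<u" "u<1"
  shows "((\<lambda>x. H x u) has_real_derivative U0 x u * I2 x u) (at x)"
proof -
  have dU: "((\<lambda>x. U0 x u) has_real_derivative 4/3) (at x)" unfolding U0_def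
    by (auto intro!: derivative_eq_intros)
  have "((\<lambda>x. U0 x u * I1 x u - 4/3 * I0 x u) has_real_derivative (4/3 * I1 x u + I2 x u * U0 x u - 4/3 * I1 x u)) (at x)"
    by (intro DERIV_diff DERIV_mult dU dI1[OF x u] DERIV_cmult dI0[OF x u])
  then show ?thesis unfolding H_def by (simp add: mult.commute)
qed

lemma U0pos: "0 < x \<Longrightarrow> 0 < u \<Longrightarrow> 0 < U0 x u" unfolding U0_def by simp

lemma dG:
  assumes x: "0<x" "x<1" and u: "0<u" "u<1"
  shows "((\<lambda>\<xi>. - F0 f \<xi> u / U0 \<xi> u) has_real_derivative (- H x u / (U0 x u)^2)) (at x)"
proof -
  have U: "U0 x u \<noteq> 0" using U0pos x u by (metis less_irrefl)
  have "((\<lambda>\<xi>. - I0 \<xi> u / U0 \<xi> u) has_real_derivative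
          ((- I1 x u) * U0 x u - (- I0 x u) * (4/3)) / (U0 x u * U0 x u)) (at x)"
  proof (rule DERIV_divide)
    show "((\<lambda>\<xi>. - I0 \<xi> u) has_real_derivative - I1 x u) (at x)" by (rule DERIV_minus[OF dI0[OF x u]])
    show "((\<lambda>\<xi>. U0 \<xi> u) has_real_derivative 4/3) (at x)" unfolding U0_def
      by (auto intro!: derivative_eq_intros)
    show "U0 x u \<noteq> 0" by (rule U)
  qed
  moreover have "((- I1 x u) * U0 x u - (- I0 x u) * (4/3)) / (U0 x u * U0 x u) = - H x u / (U0 x u)^2"
    unfolding H_def by (simp add: power2_eq_square algebra_simps)
  ultimately have d: "((\<lambda>\<xi>. - I0 \<xi> u / U0 \<xi> u) has_real_derivative - H x u / (U0 x u)^2) (at x)" by simp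
  show ?thesis
  proof (rule has_field_derivative_transform_within_open[OF d, of "{0<..<1}"])
    fix z :: real assume "z \<in> {0<..<1}"
    then show "- I0 z u / U0 z u = - F0 f z u / U0 z u" using F0_eq[of z u] u unfolding I0_def by simp
  qed (use x in auto)
qed

lemma crit_iff:
  assumes x: "0<x" "x<1" and u: "0<u" "u<1"
  shows "((\<lambda>\<xi>. - F0 f \<xi> u / U0 \<xi> u) has_real_derivative 0) (at x) \<longleftrightarrow> H x u = 0"
proof
  assume "((\<lambda>\<xi>. - F0 f \<xi> u / U0 \<xi> u) has_real_derivative 0) (at x)"
  then have "- H x u / (U0 x u)^2 = 0" using DERIV_unique dG[OF x u] by blast
  then show "H x u = 0" using U0pos[of x u] x u by simp
next
  assume "H x u = 0"
  then show "((\<lambda>\<xi>. - F0 f \<xi> u / U0 \<xi> u) has_real_derivative 0) (at x)" using dG[OF x u] by simp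
qed

end


lemma lin_aux: "(I::real) \<le> M + (2*F + a + 2*b - 2*G)/2 \<Longrightarrow> F \<le> -(M + a + 2*b - G) - 1 \<Longrightarrow> 0 \<le> a \<Longrightarrow> 0 \<le> b \<Longrightarrow> I < 0"
  by argo

lemma cont_sup:
  fixes g :: "real \<Rightarrow> real"
  assumes "continuous_on {a..b} g" "a \<le> b"
  shows "\<exists>y\<in>{a..b}. \<forall>z\<in>{a..b}. g z \<le> g y"
  using continuous_attains_sup[OF compact_Icc _ assms(1)] assms(2) by auto

lemma cont_bnd:
  fixes g :: "real \<Rightarrow> real"
  assumes "continuous_on {a..b} g"
  shows "\<exists>B. \<forall>z\<in>{a..b}. \<bar>g z\<bar> \<le> B"
proof (cases "a \<le> b")
  case True
  obtain y1 where "\<forall>z\<in>{a..b}. g z \<le> g y1" using cont_sup[OF assms True] by auto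
  moreover have "continuous_on {a..b} (\<lambda>z. - g z)" using assms by (intro continuous_intros)
  then obtain y2 where "\<forall>z\<in>{a..b}. - g z \<le> - g y2" using cont_sup[OF _ True] by blast
  ultimately show ?thesis by (intro exI[of _ "\<bar>g y1\<bar> + \<bar>g y2\<bar>"]) force
next
  case False then show ?thesis by auto
qed

lemma ftc_real:
  fixes F F' :: "real \<Rightarrow> real"
  assumes "a \<le> b" "\<And>r. r \<in> {a..b} \<Longrightarrow> (F has_real_derivative F' r) (at r)"
  shows "(F' has_integral (F b - F a)) {a..b}"
  by (rule fundamental_theorem_of_calculus[OF assms(1)])
     (use assms(2) in \<open>auto simp: has_real_derivative_iff_has_vector_derivative intro: has_vector_derivative_at_within\<close>)

context fs begin

lemma da:
  "((\<lambda>r. x + r^2*(u-x)) has_real_derivative 2*r*(u-x)) (at r)"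
  by (auto intro!: derivative_eq_intros)

lemma dPsi:
  assumes "0 < a" "a < 1"
  shows "((\<lambda>a. (u-a)^2*f2 a + 2*(u-a)*f1 a + 2*f a) has_real_derivative (u-a)^2*f3 a) (at a)"
proof -
  have "((\<lambda>a. (u-a)^2*f2 a + 2*(u-a)*f1 a + 2*f a) has_real_derivative
     (2*(u-a)*(-1)*f2 a + (u-a)^2*f3 a + (2*(-1)*f1 a + 2*(u-a)*f2 a) + 2*f1 a)) (at a)"
    by (intro DERIV_add DERIV_mult DERIV_cmult D0 D1 D2 assms)
       (auto intro!: derivative_eq_intros D0[OF assms] D1[OF assms] D2[OF assms])
  then show ?thesis by (simp add: algebra_simps)
qed

lemma intI2: "0<x \<Longrightarrow> x<1 \<Longrightarrow> 0<u \<Longrightarrow> u<1 \<Longrightarrow>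
   (\<lambda>r. (1-r^2)^2 * f3 (x + r^2*(u-x))) integrable_on {0..1}"
  by (intro integrable_continuous_interval continuous_intros cont1[OF C3])

lemma I2_neg: "\<forall>\<^sub>F u in at_left 1. \<forall>x. 0<x \<and> x<1 \<longrightarrow> I2 x u < 0"
proof -
  obtain \<delta>1 where d1: "\<delta>1 > 0" "\<And>u. 1 - \<delta>1 < u \<Longrightarrow> u < 1 \<Longrightarrow> f3 u < 0"
    using f3n1 unfolding f3eq by blast
  obtain \<delta>0 where d0: "\<delta>0 > 0" "\<And>u. 0 < u \<Longrightarrow> u < \<delta>0 \<Longrightarrow> f3 u < 0"
    using f3n0 unfolding f3eq by blast
  define e1 where "e1 = min \<delta>1 (1/2)"
  define e0 where "e0 = min \<delta>0 (1/2)"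
  define c where "c = 1 - e1/2"
  have e1: "0 < e1" "e1 \<le> 1/2" "e1 \<le> \<delta>1" unfolding e1_def using d1 by auto
  have e0: "0 < e0" "e0 \<le> 1/2" "e0 \<le> \<delta>0" unfolding e0_def using d0 by auto
  have c: "3/4 \<le> c" "c < 1" "1 - \<delta>1 < c" unfolding c_def using e1 by auto
  have "continuous_on {e0/2..c} f3" using e0 c by (intro continuous_on_subset[OF C3]) auto
  then obtain y where "\<forall>z\<in>{e0/2..c}. f3 z \<le> f3 y" using cont_sup[of "e0/2" c f3] e0 c by auto
  then obtain M where M: "M \<ge> 0" "\<And>z. 0 < z \<Longrightarrow> z \<le> c \<Longrightarrow> f3 z \<le> M"
  proof -
    assume r: "\<And>M. 0 \<le> M \<Longrightarrow> (\<And>z. 0 < z \<Longrightarrow> z \<le> c \<Longrightarrow> f3 z \<le> M) \<Longrightarrow> thesis"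
    assume y: "\<forall>z\<in>{e0/2..c}. f3 z \<le> f3 y"
    show thesis
    proof (rule r[of "max (f3 y) 0"])
      fix z assume z: "0 < z" "z \<le> c"
      show "f3 z \<le> max (f3 y) 0"
      proof (cases "z < e0/2")
        case True then have "f3 z < 0" using d0(2)[of z] z e0 by auto
        then show ?thesis by auto
      next
        case False then have "z \<in> {e0/2..c}" using z by auto
        then have "f3 z \<le> f3 y" using y by blast
        then show ?thesis by linarith
      qed
    qed auto
  qed
  define B where "B = M + \<bar>f2 c\<bar> + 2*\<bar>f1 c\<bar> - f c"
  have ev1: "\<forall>\<^sub>F u in at_left 1. f u \<le> - B - 1"
    using flim1 unfolding filterlim_at_bot by blast
  have ev2: "\<forall>\<^sub>F u in at_left 1. u \<in> {c<..<1}" by (rule eventually_at_left_real) (use c in auto)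
  show ?thesis
  proof (rule eventually_mono[OF eventually_conj[OF ev1 ev2]], safe)
    fix u x :: real
    assume fu: "f u \<le> - B - 1" and u: "u \<in> {c<..<1}" and x: "0 < x" "x < 1"
    have u0: "0 < u" "u < 1" using u c by auto
    define h where "h = (\<lambda>r. (1-r^2)^2 * f3 (x + r^2*(u-x)))"
    have hint: "h integrable_on {0..1}" unfolding h_def by (rule intI2[OF x u0])
    show "I2 x u < 0"
    proof (cases "x < c")
      case True
      define r1 where "r1 = sqrt ((c-x)/(u-x))"
      have ux: "u - x > 0" using True u by auto
      have r1: "0 \<le> r1" "r1 \<le> 1" unfolding r1_def using True u ux
        by (auto simp: real_sqrt_le_1_iff divide_le_eq_1)
      have r1sq: "r1^2 = (c-x)/(u-x)" unfolding r1_def using True ux by simp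
      have ar1: "x + r1^2*(u-x) = c" using r1sq ux by simp
      have split: "integral {0..r1} h + integral {r1..1} h = I2 x u"
        unfolding I2_def h_def[symmetric] by (rule Henstock_Kurzweil_Integration.integral_combine[OF r1 hint])
      have p1: "integral {0..r1} h \<le> M"
      proof -
        have "integral {0..r1} h \<le> integral {0..r1} (\<lambda>_. M)"
        proof (rule integral_le)
          show "h integrable_on {0..r1}" by (rule integrable_subinterval_real[OF hint]) (use r1 in auto)
          show "(\<lambda>_. M) integrable_on {0..r1}" by (rule has_integral_integrable[OF has_integral_const_real])
        next
          fix r assume r: "r \<in> {0..r1}"
          then have rr: "r^2 \<le> r1^2" using r1 by (auto intro!: power_mono)
          have ain': "0 < x + r^2*(u-x)" using ain[OF x u0, of r] r r1 by auto
          have "x + r^2*(u-x) \<le> c" using ar1 rr ux by (smt (verit) mult_right_mono)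
          then have f3le: "f3 (x + r^2*(u-x)) \<le> M" using M ain' by auto
          have w: "0 \<le> (1-r^2)^2" "(1-r^2)^2 \<le> 1"
            using r r1 by (auto simp: power_le_one abs_square_le_1)
          have "(1-r^2)^2 * f3 (x + r^2*(u-x)) \<le> (1-r^2)^2 * M"
            using w f3le by (intro mult_left_mono) auto
          also have "\<dots> \<le> M" using w M by (simp add: mult_left_le_one_le)
          finally show "h r \<le> M" unfolding h_def .
        qed
        also have "\<dots> = r1 * M" using r1 by simp
        also have "\<dots> \<le> M" using r1 M by (simp add: mult_left_le_one_le)
        finally show ?thesis .
      qed
      define Psi where "Psi = (\<lambda>a. (u-a)^2*f2 a + 2*(u-a)*f1 a + 2*f a)"
      have p2: "integral {r1..1} h \<le> (Psi u - Psi c) / 2"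
      proof -
        define g where "g = (\<lambda>r. (u - (x + r^2*(u-x)))^2 * f3 (x + r^2*(u-x)) * (2*r*(u-x)))"
        have gi: "(g has_integral (Psi (x + 1^2*(u-x)) - Psi (x + r1^2*(u-x)))) {r1..1}"
        proof (rule ftc_real[where F="\<lambda>r. Psi (x + r^2*(u-x))"])
          show "r1 \<le> 1" by (rule r1)
          fix r assume r: "r \<in> {r1..1}"
          have aa: "0 < x + r^2*(u-x)" "x + r^2*(u-x) < 1" using ain[OF x u0, of r] r r1 by auto
          show "((\<lambda>r. Psi (x + r^2*(u-x))) has_real_derivative g r) (at r)"
            unfolding Psi_def g_def by (rule DERIV_chain2[OF dPsi[OF aa] da])
        qed
        have gi': "((\<lambda>r. g r / 2) has_integral (Psi u - Psi c) / 2) {r1..1}"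
          using has_integral_divide[OF gi, of 2] ar1 by simp
        have "integral {r1..1} h \<le> (Psi u - Psi c) / 2"
        proof (rule has_integral_le[OF _ gi'])
          show "(h has_integral integral {r1..1} h) {r1..1}"
            using hint r1 by (intro integrable_integral integrable_subinterval_real[OF hint]) auto
        next
          fix r assume r: "r \<in> {r1..1}"
          have rr: "r1^2 \<le> r^2" using r r1 by (auto intro!: power_mono)
          have aa: "0 < x + r^2*(u-x)" "x + r^2*(u-x) < 1" using ain[OF x u0, of r] r r1 by auto
          have "c \<le> x + r^2*(u-x)" using ar1 rr ux by (smt (verit) mult_right_mono)
          then have neg: "f3 (x + r^2*(u-x)) < 0" using d1(2) c aa by auto
          have eq: "u - (x + r^2*(u-x)) = (1-r^2)*(u-x)" by (simp add: algebra_simps)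
          have key: "((1-r^2)*d)^2 * F * (2*r*d) / 2 = (r*d^3) * ((1-r^2)^2 * F)" for F d :: real
            by (simp add: power2_eq_square power3_eq_cube field_simps)
          have "g r / 2 = (r*(u-x)^3) * ((1-r^2)^2 * f3 (x + r^2*(u-x)))"
            unfolding g_def eq by (rule key)
          moreover have "r*(u-x)^3 \<le> 1"
          proof -
            have "(u-x)^3 \<le> 1" using ux u x by (simp add: power_le_one)
            moreover have "0 \<le> (u-x)^3" using ux by simp
            ultimately show ?thesis using r r1 by (simp add: mult_le_one)
          qed
          moreover have "(1-r^2)^2 * f3 (x + r^2*(u-x)) \<le> 0"
            using neg by (simp add: mult_nonneg_nonpos)
          ultimately show "h r \<le> g r / 2" unfolding h_def
          proof -
            fix Q k :: real assume e: "g r / 2 = k * Q" and k: "k \<le> 1" and Q: "Q \<le> 0"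
            have "(1 - k) * Q \<le> 0" using k Q by (intro mult_nonneg_nonpos) auto
            then have "Q \<le> k * Q" by (simp add: left_diff_distrib)
            then show "Q \<le> g r / 2" using e by simp
          qed
        qed
        then show ?thesis .
      qed
      have "Psi u = 2 * f u" unfolding Psi_def by simp
      moreover have "Psi c \<ge> - \<bar>f2 c\<bar> - 2*\<bar>f1 c\<bar> + 2 * f c"
      proof -
        have uc: "0 \<le> u - c" "u - c \<le> 1" using u c by auto
        have "(u-c)^2 * f2 c \<ge> - \<bar>f2 c\<bar>"
        proof -
          have "(u-c)^2 \<le> 1" using uc by (simp add: power_le_one)
          then have "(u-c)^2 * \<bar>f2 c\<bar> \<le> \<bar>f2 c\<bar>" by (simp add: mult_left_le_one_le)
          moreover have "(u-c)^2 * (- \<bar>f2 c\<bar>) \<le> (u-c)^2 * f2 c"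
            by (intro mult_left_mono) auto
          ultimately show ?thesis by linarith
        qed
        moreover have "2*(u-c) * f1 c \<ge> - 2*\<bar>f1 c\<bar>"
        proof -
          have "(u-c) * \<bar>f1 c\<bar> \<le> \<bar>f1 c\<bar>" using uc by (simp add: mult_left_le_one_le)
          moreover have "(u-c) * (- \<bar>f1 c\<bar>) \<le> (u-c) * f1 c" using uc
            by (intro mult_left_mono) auto
          ultimately show ?thesis by linarith
        qed
        ultimately show ?thesis unfolding Psi_def by linarith
      qed
      ultimately have "I2 x u \<le> M + (2 * f u + \<bar>f2 c\<bar> + 2*\<bar>f1 c\<bar> - 2 * f c) / 2"
      proof -
        assume a1: "Psi u = 2 * f u" and a2: "- \<bar>f2 c\<bar> - 2*\<bar>f1 c\<bar> + 2 * f c \<le> Psi c"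
        have "(Psi u - Psi c)/2 \<le> (2 * f u + \<bar>f2 c\<bar> + 2*\<bar>f1 c\<bar> - 2 * f c) / 2"
          using a1 a2 by (intro divide_right_mono) auto
        then show ?thesis using split p1 p2 by linarith
      qed
      then show ?thesis using fu unfolding B_def by (rule lin_aux) auto
    next
      case False
      define lo where "lo = min x u"
      define hi where "hi = max x u"
      have lohi: "c \<le> lo" "lo \<le> hi" "hi < 1" using False u x unfolding lo_def hi_def by auto
      have inr: "x + r^2*(u-x) \<in> {lo..hi}" if "r \<in> {0..1}" for r
      proof -
        have w: "0 \<le> r^2" "r^2 \<le> 1" using that by (auto simp: power_le_one)
        have e: "x + r^2*(u-x) = (1-r^2)*x + r^2*u" by (simp add: algebra_simps)
        have "(1-r^2)*lo + r^2*lo \<le> (1-r^2)*x + r^2*u"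
          using w unfolding lo_def by (intro add_mono mult_left_mono) auto
        moreover have "(1-r^2)*x + r^2*u \<le> (1-r^2)*hi + r^2*hi"
          using w unfolding hi_def by (intro add_mono mult_left_mono) auto
        ultimately show ?thesis using e by (simp add: algebra_simps)
      qed
      have "continuous_on {lo..hi} f3" using lohi c by (intro continuous_on_subset[OF C3]) auto
      then obtain y where y: "y \<in> {lo..hi}" "\<forall>z\<in>{lo..hi}. f3 z \<le> f3 y"
        using cont_sup[of lo hi f3] lohi by auto
      have fy: "f3 y < 0" using y lohi c d1 by auto
      have poly: "((\<lambda>r. (1-r^2)^2 * f3 y) has_integral (8/15 * f3 y)) {0..1}"
      proof -
        have "((\<lambda>r. (1-r^2)^2 * f3 y) has_integral
                ((\<lambda>r. (r - 2*r^3/3 + r^5/5) * f3 y) 1 - (\<lambda>r. (r - 2*r^3/3 + r^5/5) * f3 y) 0)) {0..1}"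
        proof (rule ftc_real)
          fix r :: real
          show "((\<lambda>r. (r - 2*r^3/3 + r^5/5) * f3 y) has_real_derivative (1-r^2)^2 * f3 y) (at r)"
            by (auto intro!: derivative_eq_intros simp: algebra_simps power2_eq_square power3_eq_cube
                  numeral_eq_Suc)
        qed simp
        then show ?thesis by simp
      qed
      have "I2 x u \<le> 8/15 * f3 y"
        unfolding I2_def
      proof (rule has_integral_le[OF integrable_integral[OF intI2[OF x u0]] poly])
        fix r :: real assume r: "r \<in> {0..1}"
        have "f3 (x + r^2*(u-x)) \<le> f3 y" using y inr[OF r] by auto
        then show "(1-r^2)^2 * f3 (x + r^2*(u-x)) \<le> (1-r^2)^2 * f3 y"
          by (intro mult_left_mono) auto
      qed
      then show ?thesis using fy by linarith
    qed
  qed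
qed

end


context fs begin

definition "hH x u r = U0 x u * ((1-r^2) * f2 (x + r^2*(u-x))) - 4/3 * f1 (x + r^2*(u-x))"
definition "Wf x u r = 4/3 - U0 x u * (1 + 1/r^2) / (2*(u-x))"
definition "Af x u r = U0 x u * (1 - r^2) / (2*r*(u-x))"

lemma H_int:
  assumes x: "0<x" "x<1" and u: "0<u" "u<1"
  shows "H x u = integral {0..1} (hH x u)"
proof -
  have i1: "(\<lambda>r. (1-r^2) * f2 (x + r^2*(u-x))) integrable_on {0..1}"
    by (intro integrable_continuous_interval continuous_intros cont1[OF C2 u x])
  have i0: "(\<lambda>r. f1 (x + r^2*(u-x))) integrable_on {0..1}"
    by (intro integrable_continuous_interval continuous_intros cont1[OF C1 u x])
  have "integral {0..1} (hH x u) = integral {0..1} (\<lambda>r. U0 x u * ((1-r^2) * f2 (x + r^2*(u-x))))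
         - integral {0..1} (\<lambda>r. 4/3 * f1 (x + r^2*(u-x)))"
    unfolding hH_def by (intro integral_diff integrable_continuous_interval continuous_intros cont1[OF C2 u x] cont1[OF C1 u x])
  also have "\<dots> = H x u" unfolding H_def I1_def I0_def by simp
  finally show ?thesis by simp
qed

lemma hH_cont:
  assumes x: "0<x" "x<1" and u: "0<u" "u<1"
  shows "continuous_on {0..1} (hH x u)"
  unfolding hH_def by (intro continuous_intros cont1[OF C2 u x] cont1[OF C1 u x])

lemma H_decomp:
  assumes x: "0<x" "x<1" and u: "x<u" "u<1" and rho: "0<\<rho>" "\<rho><1"
  shows "H x u = integral {0..\<rho>} (hH x u) - Af x u \<rho> * f1 (x + \<rho>^2*(u-x))
            + integral {\<rho>..1} (\<lambda>r. Wf x u r * (- f1 (x + r^2*(u-x))))"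
    and "((\<lambda>r. r*(u-x) * (- f1 (x + r^2*(u-x)))) has_integral (f (x + \<rho>^2*(u-x)) - f u)/2) {\<rho>..1}"
proof -
  have u0: "0<u" using u x by simp
  have d: "u - x > 0" using u by simp
  have hint: "hH x u integrable_on {0..1}" by (rule integrable_continuous_interval[OF hH_cont[OF x u0 u(2)]])
  have comb: "integral {0..\<rho>} (hH x u) + integral {\<rho>..1} (hH x u) = H x u"
    unfolding H_int[OF x u0 u(2)] by (rule Henstock_Kurzweil_Integration.integral_combine) (use rho hint in auto)
  have ar: "0 < x + r^2*(u-x)" "x + r^2*(u-x) < 1" if "r \<in> {\<rho>..1}" for r
    using ain[OF x u0 u(2), of r] that rho by auto
  define Fp where "Fp = (\<lambda>r. - U0 x u * (1 + 1/r^2) / (2*(u-x)) * f1 (x + r^2*(u-x))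
                        + U0 x u * (1-r^2) * f2 (x + r^2*(u-x)))"
  have fF: "(Fp has_integral (Af x u 1 * f1 (x + 1^2*(u-x)) - Af x u \<rho> * f1 (x + \<rho>^2*(u-x)))) {\<rho>..1}"
  proof (rule ftc_real)
    show "\<rho> \<le> 1" using rho by simp
    fix r assume r: "r \<in> {\<rho>..1}"
    have rp: "r > 0" using r rho by auto
    have dA: "((\<lambda>r. Af x u r) has_real_derivative - U0 x u * (1 + 1/r^2) / (2*(u-x))) (at r)"
    proof -
      have "((\<lambda>r. U0 x u / (2*(u-x)) * (1/r - r)) has_real_derivative
               U0 x u / (2*(u-x)) * (- (1 / r^2) - 1)) (at r)"
        using rp d by (auto intro!: derivative_eq_intros simp: power2_eq_square)
      moreover have "(\<lambda>r. U0 x u / (2*(u-x)) * (1/r - r)) = (\<lambda>r. Af x u r)"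
      proof
        fix r :: real
        show "U0 x u / (2*(u-x)) * (1/r - r) = Af x u r"
        proof (cases "r = 0")
          case True then show ?thesis unfolding Af_def by simp
        next
          case False then show ?thesis unfolding Af_def using d
            by (simp add: field_simps power2_eq_square)
        qed
      qed
      ultimately have d1: "((\<lambda>r. Af x u r) has_real_derivative U0 x u / (2*(u-x)) * (- (1 / r^2) - 1)) (at r)"
        by metis
      have "U0 x u / (2*(u-x)) * (- (1 / r^2) - 1) = - U0 x u * (1 + 1/r^2) / (2*(u-x))"
        using d rp by (simp add: field_simps)
      then show ?thesis using d1 by (rule DERIV_cong[rotated])
    qed
    have "((\<lambda>r. Af x u r * f1 (x + r^2*(u-x))) has_real_derivative
        (- U0 x u * (1 + 1/r^2) / (2*(u-x))) * f1 (x + r^2*(u-x)) + (f2 (x + r^2*(u-x)) * (2*r*(u-x))) * Af x u r) (at r)"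
      by (intro DERIV_mult dA DERIV_chain2[OF D1[OF ar[OF r]] da])
    moreover have "(f2 (x + r^2*(u-x)) * (2*r*(u-x))) * Af x u r = U0 x u * (1-r^2) * f2 (x + r^2*(u-x))"
      unfolding Af_def using rp d by (simp add: field_simps)
    ultimately show "((\<lambda>r. Af x u r * f1 (x + r^2*(u-x))) has_real_derivative Fp r) (at r)"
      unfolding Fp_def by simp
  qed
  have A1: "Af x u 1 = 0" unfolding Af_def by simp
  have wint: "((\<lambda>r. Wf x u r * (- f1 (x + r^2*(u-x)))) has_integral
              integral {\<rho>..1} (\<lambda>r. Wf x u r * (- f1 (x + r^2*(u-x))))) {\<rho>..1}"
  proof (rule integrable_integral, rule integrable_continuous_interval)
    have "continuous_on {\<rho>..1} (\<lambda>r. f1 (x + r^2*(u-x)))"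
      by (rule continuous_on_subset[OF cont1[OF C1 u0 u(2) x]]) (use rho in auto)
    moreover have "continuous_on {\<rho>..1} (\<lambda>r. Wf x u r)"
      unfolding Wf_def using rho d by (intro continuous_intros) auto
    ultimately show "continuous_on {\<rho>..1} (\<lambda>r. Wf x u r * (- f1 (x + r^2*(u-x))))"
      by (intro continuous_intros)
  qed
  have "((\<lambda>r. Fp r + Wf x u r * (- f1 (x + r^2*(u-x)))) has_integral
          (- Af x u \<rho> * f1 (x + \<rho>^2*(u-x)) + integral {\<rho>..1} (\<lambda>r. Wf x u r * (- f1 (x + r^2*(u-x)))))) {\<rho>..1}"
    using has_integral_add[OF fF wint] A1 by simp
  then have "(hH x u has_integral
          (- Af x u \<rho> * f1 (x + \<rho>^2*(u-x)) + integral {\<rho>..1} (\<lambda>r. Wf x u r * (- f1 (x + r^2*(u-x)))))) {\<rho>..1}"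
  proof (rule has_integral_eq[rotated])
    fix r assume r: "r \<in> {\<rho>..1}"
    show "Fp r + Wf x u r * (- f1 (x + r^2*(u-x))) = hH x u r"
      unfolding Fp_def Wf_def hH_def by (simp add: algebra_simps)
  qed
  then have "integral {\<rho>..1} (hH x u) = - Af x u \<rho> * f1 (x + \<rho>^2*(u-x)) + integral {\<rho>..1} (\<lambda>r. Wf x u r * (- f1 (x + r^2*(u-x))))"
    by (rule integral_unique)
  then show "H x u = integral {0..\<rho>} (hH x u) - Af x u \<rho> * f1 (x + \<rho>^2*(u-x))
            + integral {\<rho>..1} (\<lambda>r. Wf x u r * (- f1 (x + r^2*(u-x))))"
    using comb by simp
  have "((\<lambda>r. f1 (x + r^2*(u-x)) * (2*r*(u-x))) has_integral (f (x + 1^2*(u-x)) - f (x + \<rho>^2*(u-x)))) {\<rho>..1}"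
  proof (rule ftc_real)
    show "\<rho> \<le> 1" using rho by simp
    fix r assume r: "r \<in> {\<rho>..1}"
    show "((\<lambda>r. f (x + r^2*(u-x))) has_real_derivative f1 (x + r^2*(u-x)) * (2*r*(u-x))) (at r)"
      by (rule DERIV_chain2[OF D0[OF ar[OF r]] da])
  qed
  then have "((\<lambda>r. (f1 (x + r^2*(u-x)) * (2*r*(u-x))) / (-2)) has_integral (f u - f (x + \<rho>^2*(u-x))) / (-2)) {\<rho>..1}"
    by (intro has_integral_divide) simp
  moreover have "(f u - f (x + \<rho>^2*(u-x))) / (-2) = (f (x + \<rho>^2*(u-x)) - f u)/2" by (simp add: field_simps)
  moreover have "(\<lambda>r. (f1 (x + r^2*(u-x)) * (2*r*(u-x))) / (-2)) = (\<lambda>r. r*(u-x) * (- f1 (x + r^2*(u-x))))"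
    by (simp add: fun_eq_iff)
  ultimately show "((\<lambda>r. r*(u-x) * (- f1 (x + r^2*(u-x)))) has_integral (f (x + \<rho>^2*(u-x)) - f u)/2) {\<rho>..1}"
    by metis
qed

end


context fs begin

lemma H_bnd:
  assumes x: "0<x" "x<1" and rho: "0<\<rho>" "\<rho><1"
  shows "\<exists>C. \<forall>u. (1+x)/2 < u \<and> u < 1 \<longrightarrow>
     \<bar>integral {0..\<rho>} (hH x u) - Af x u \<rho> * f1 (x + \<rho>^2*(u-x))\<bar> \<le> C \<and> \<bar>f (x + \<rho>^2*(u-x))\<bar> \<le> C"
proof -
  define c where "c = x + \<rho>^2*(1-x)"
  have c: "x \<le> c" "c < 1"
  proof -
    have "0 < \<rho>^2" "\<rho>^2 < 1" using rho by (auto simp: power_less_one_iff)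
    then show "x \<le> c" "c < 1" unfolding c_def using x
      by (auto intro!: mult_nonneg_nonneg) (smt (verit) mult_less_cancel_right2)
  qed
  have sub: "{x..c} \<subseteq> {0<..<1}" using x c by auto
  obtain K0 where K0: "\<forall>z\<in>{x..c}. \<bar>f z\<bar> \<le> K0" using cont_bnd[OF continuous_on_subset[OF C0 sub]] by blast
  obtain K1 where K1: "\<forall>z\<in>{x..c}. \<bar>f1 z\<bar> \<le> K1" using cont_bnd[OF continuous_on_subset[OF C1 sub]] by blast
  obtain K2 where K2: "\<forall>z\<in>{x..c}. \<bar>f2 z\<bar> \<le> K2" using cont_bnd[OF continuous_on_subset[OF C2 sub]] by blast
  have K1p: "0 \<le> K1" using K1 c by force
  have K2p: "0 \<le> K2" using K2 c by force
  have inr: "x + r^2*(u-x) \<in> {x..c}" if "r \<in> {0..\<rho>}" "x < u" "u < 1" for r u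
  proof -
    have "r^2 \<le> \<rho>^2" using that by (auto intro!: power_mono)
    moreover have "0 \<le> r^2" by simp
    ultimately have "r^2*(u-x) \<le> \<rho>^2*(1-x)" using that by (intro mult_mono) auto
    moreover have "0 \<le> r^2*(u-x)" using that by simp
    ultimately show ?thesis unfolding c_def by auto
  qed
  show ?thesis
  proof (rule exI[of _ "max (2*K2 + 2*K1 + 2*K1/(\<rho>*(1-x))) K0"], intro allI impI conjI)
    fix u assume u: "(1+x)/2 < u \<and> u < 1"
    have xu: "x < u" "u < 1" "0 < u" using u x by auto
    have U: "0 < U0 x u" "U0 x u \<le> 2" unfolding U0_def using xu x by auto
    have arho: "x + \<rho>^2*(u-x) \<in> {x..c}" using inr[of \<rho> u] rho xu by auto
    have i1: "\<bar>integral {0..\<rho>} (hH x u)\<bar> \<le> (2*K2 + 2*K1) * (\<rho> - 0)"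
    proof -
      have "norm (integral {0..\<rho>} (hH x u)) \<le> (2*K2 + 2*K1) * (\<rho> - 0)"
      proof (rule integral_bound)
        show "0 \<le> \<rho>" using rho by simp
        show "continuous_on {0..\<rho>} (hH x u)"
          by (rule continuous_on_subset[OF hH_cont[OF x xu(3) xu(2)]]) (use rho in auto)
        fix t assume t: "t \<in> {0..\<rho>}"
        have a: "x + t^2*(u-x) \<in> {x..c}" using inr[OF t xu(1,2)] .
        have w: "0 \<le> 1 - t^2" "1 - t^2 \<le> 1" using t rho by (auto simp: power_le_one)
        have "\<bar>U0 x u * ((1-t^2) * f2 (x + t^2*(u-x)))\<bar> \<le> 2 * (1 * K2)"
          unfolding abs_mult using U w K2 a by (intro mult_mono) auto
        moreover have "\<bar>4/3 * f1 (x + t^2*(u-x))\<bar> \<le> 2 * K1"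
        proof -
          have "\<bar>f1 (x + t^2*(u-x))\<bar> \<le> K1" using K1 a by blast
          then show ?thesis by (simp add: abs_mult)
        qed
        ultimately show "norm (hH x u t) \<le> 2*K2 + 2*K1" unfolding hH_def by simp
      qed
      then show ?thesis by simp
    qed
    have i1': "\<bar>integral {0..\<rho>} (hH x u)\<bar> \<le> 2*K2 + 2*K1"
    proof -
      have "(2*K2 + 2*K1) * \<rho> \<le> (2*K2 + 2*K1) * 1" using rho K1p K2p by (intro mult_left_mono) auto
      then show ?thesis using i1 by simp
    qed
    have A: "\<bar>Af x u \<rho>\<bar> \<le> 2/(\<rho>*(1-x))"
    proof -
      have d: "(1-x)/2 < u - x" using u by auto
      have "\<bar>Af x u \<rho>\<bar> = U0 x u * (1-\<rho>^2) / (2*\<rho>*(u-x))"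
        unfolding Af_def using U rho xu by (simp add: power_le_one abs_mult)
      also have "\<dots> \<le> 2 * 1 / (2*\<rho>*((1-x)/2))"
      proof (rule frac_le)
        show "0 \<le> 2 * (1::real)" by simp
        show "U0 x u * (1-\<rho>^2) \<le> 2 * 1" using U rho by (intro mult_mono) (auto simp: power_le_one)
        show "0 < 2*\<rho>*((1-x)/2)" using rho x by simp
        show "2*\<rho>*((1-x)/2) \<le> 2*\<rho>*(u-x)" using d rho by simp
      qed
      also have "\<dots> = 2/(\<rho>*(1-x))" by simp
      finally show ?thesis .
    qed
    have "\<bar>Af x u \<rho> * f1 (x + \<rho>^2*(u-x))\<bar> \<le> 2/(\<rho>*(1-x)) * K1"
      unfolding abs_mult using A K1 arho rho x by (intro mult_mono) auto
    then show "\<bar>integral {0..\<rho>} (hH x u) - Af x u \<rho> * f1 (x + \<rho>^2*(u-x))\<bar> \<le> max (2*K2 + 2*K1 + 2*K1/(\<rho>*(1-x))) K0"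
      using i1' by simp
    show "\<bar>f (x + \<rho>^2*(u-x))\<bar> \<le> max (2*K2 + 2*K1 + 2*K1/(\<rho>*(1-x))) K0"
    proof -
      have "\<bar>f (x + \<rho>^2*(u-x))\<bar> \<le> K0" using K0 arho by blast
      then show ?thesis by linarith
    qed
  qed
qed

end


context fs begin

lemma H_neg:
  assumes x: "1/4 < x" "x < 1"
  shows "\<forall>\<^sub>F u in at_left 1. H x u < 0"
proof -
  have x0: "0 < x" using x by simp
  define \<rho> :: real where "\<rho> = 1/2"
  have rho: "0 < \<rho>" "\<rho> < 1" unfolding \<rho>_def by auto
  define \<eta> where "\<eta> = (4*x+2)/(3*(1-x)) - 4/3"
  have eta: "\<eta> > 0"
  proof -
    have "4/3 < (4*x+2)/(3*(1-x))" using x by (simp add: field_simps)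
    then show ?thesis unfolding \<eta>_def by simp
  qed
  obtain C where C: "\<And>u. (1+x)/2 < u \<Longrightarrow> u < 1 \<Longrightarrow>
     \<bar>integral {0..\<rho>} (hH x u) - Af x u \<rho> * f1 (x + \<rho>^2*(u-x))\<bar> \<le> C \<and> \<bar>f (x + \<rho>^2*(u-x))\<bar> \<le> C"
    using H_bnd[OF x0 x(2) rho] by blast
  define Z where "Z = - (2*C/\<eta> + C + 1)"
  have ev1: "\<forall>\<^sub>F u in at_left 1. f u \<le> Z"
    using flim1 unfolding filterlim_at_bot by blast
  have ev2: "\<forall>\<^sub>F u in at_left 1. u \<in> {(1+x)/2<..<1}" by (rule eventually_at_left_real) (use x in auto)
  show ?thesis
  proof (rule eventually_mono[OF eventually_conj[OF ev1 ev2]], safe)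
    fix u assume fu: "f u \<le> Z" and u: "u \<in> {(1+x)/2<..<1}"
    have xu: "x < u" "u < 1" "0 < u" using u x by auto
    have d: "0 < u - x" "u - x \<le> 1" using xu x by auto
    have U: "0 < U0 x u" unfolding U0_def using xu x by auto
    note dec = H_decomp[OF x0 x(2) xu(1,2) rho]
    have Ub: "(4*x+2)/(3*(1-x)) \<le> U0 x u / (u-x)"
    proof -
      have "(4*x+2)*(u-x) \<le> (4*x+2*u)*(1-x)"
      proof -
        have "(4*x+2*u)*(1-x) - (4*x+2)*(u-x) = 6*x*(1-u)" by (simp add: algebra_simps)
        moreover have "0 \<le> 6*x*(1-u)" using x0 xu by simp
        ultimately show ?thesis by linarith
      qed
      then show ?thesis unfolding U0_def using d x by (simp add: field_simps)
    qed
    have R: "integral {\<rho>..1} (\<lambda>r. Wf x u r * (- f1 (x + r^2*(u-x)))) \<le> - \<eta> * ((f (x + \<rho>^2*(u-x)) - f u)/2)"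
    proof (rule has_integral_le)
      show "((\<lambda>r. Wf x u r * (- f1 (x + r^2*(u-x)))) has_integral integral {\<rho>..1} (\<lambda>r. Wf x u r * (- f1 (x + r^2*(u-x))))) {\<rho>..1}"
      proof (rule integrable_integral, rule integrable_continuous_interval)
        have "continuous_on {\<rho>..1} (\<lambda>r. f1 (x + r^2*(u-x)))"
          by (rule continuous_on_subset[OF cont1[OF C1 xu(3) xu(2) x0 x(2)]]) (use rho in auto)
        moreover have "continuous_on {\<rho>..1} (\<lambda>r. Wf x u r)"
          unfolding Wf_def using rho d by (intro continuous_intros) auto
        ultimately show "continuous_on {\<rho>..1} (\<lambda>r. Wf x u r * (- f1 (x + r^2*(u-x))))"
          by (intro continuous_intros)
      qed
      show "((\<lambda>r. - \<eta> * (r*(u-x) * (- f1 (x + r^2*(u-x))))) has_integral - \<eta> * ((f (x + \<rho>^2*(u-x)) - f u)/2)) {\<rho>..1}"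
        by (rule has_integral_mult_right[OF dec(2)])
    next
      fix r assume r: "r \<in> {\<rho>..1}"
      have rp: "0 < r" "r \<le> 1" using r rho by auto
      have ar: "0 < x + r^2*(u-x)" "x + r^2*(u-x) < 1" using ain[OF x0 x(2) xu(3) xu(2), of r] rp by auto
      have g: "0 < - f1 (x + r^2*(u-x))" using fneg[OF ar] by simp
      have W: "Wf x u r \<le> - \<eta>"
      proof -
        have "1/r^2 \<ge> 1" using rp by (simp add: power_le_one)
        then have "U0 x u * 2 / (2*(u-x)) \<le> U0 x u * (1 + 1/r^2) / (2*(u-x))"
          using U d by (intro divide_right_mono mult_left_mono) auto
        moreover have "U0 x u * 2 / (2*(u-x)) = U0 x u / (u-x)" using d by (simp add: field_simps)
        ultimately have "U0 x u / (u-x) \<le> U0 x u * (1 + 1/r^2) / (2*(u-x))" by metis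
        then show ?thesis using Ub unfolding Wf_def \<eta>_def by linarith
      qed
      have rd: "r*(u-x) \<le> 1" "0 \<le> r*(u-x)" using rp d by (auto simp: mult_le_one)
      have "Wf x u r * (- f1 (x + r^2*(u-x))) \<le> - \<eta> * (- f1 (x + r^2*(u-x)))"
        using W g by (intro mult_right_mono) auto
      also have "\<dots> \<le> - \<eta> * (r*(u-x) * (- f1 (x + r^2*(u-x))))"
      proof -
        have "r*(u-x) * (- f1 (x + r^2*(u-x))) \<le> 1 * (- f1 (x + r^2*(u-x)))"
          using rd g by (intro mult_right_mono) auto
        then show ?thesis using eta by (intro mult_left_mono_neg) auto
      qed
      finally show "Wf x u r * (- f1 (x + r^2*(u-x))) \<le> - \<eta> * (r*(u-x) * (- f1 (x + r^2*(u-x))))" .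
    qed
    obtain Cu where Cu: "\<bar>integral {0..\<rho>} (hH x u) - Af x u \<rho> * f1 (x + \<rho>^2*(u-x))\<bar> \<le> C"
      "\<bar>f (x + \<rho>^2*(u-x))\<bar> \<le> C" using C[OF _ xu(2)] u by auto
    have "H x u \<le> C - \<eta> * ((f (x + \<rho>^2*(u-x)) - f u)/2)" using dec(1) R Cu(1) by linarith
    also have "\<dots> \<le> C - \<eta> * ((- C - Z)/2)"
    proof -
      have "(- C - Z)/2 \<le> (f (x + \<rho>^2*(u-x)) - f u)/2" using Cu(2) fu by (intro divide_right_mono) auto
      then show ?thesis using eta by (simp add: mult_left_mono)
    qed
    also have "\<dots> = - \<eta>/2"
      unfolding Z_def using eta by (simp add: field_simps)
    finally show "H x u < 0" using eta by linarith
  qed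
qed

lemma H_pos:
  assumes x: "0 < x" "x < 1/4"
  shows "\<forall>\<^sub>F u in at_left 1. H x u > 0"
proof -
  have x1: "x < 1" using x by simp
  define k0 where "k0 = (4*x+2)/(6*(1-x))"
  have k0: "0 < k0" "k0 < 2/3" unfolding k0_def using x by (auto simp: field_simps)
  define q where "q = 4/(3*k0) - 1"
  have q: "1 < q" unfolding q_def using k0 by (simp add: field_simps)
  define \<rho> where "\<rho> = sqrt (2/(1+q))"
  have rho2: "\<rho>^2 = 2/(1+q)" unfolding \<rho>_def using q by simp
  have rho: "0 < \<rho>" "\<rho> < 1" unfolding \<rho>_def using q by (auto simp: real_sqrt_lt_1_iff)
  define L where "L = 1 + (1+q)/2"
  have kL: "k0 * L = 2/3 + k0"
  proof -
    have "k0 * (1+q) = 4/3" unfolding q_def using k0 by (simp add: field_simps)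
    then show ?thesis unfolding L_def by (simp add: field_simps)
  qed
  define \<eta> where "\<eta> = (2/3 - k0)/2"
  have eta: "0 < \<eta>" unfolding \<eta>_def using k0 by simp
  have lim: "((\<lambda>u. U0 x u / (2*(u-x)) * L) \<longlongrightarrow> k0 * L) (at_left 1)"
    unfolding U0_def k0_def using x1
    by (auto intro!: tendsto_eq_intros simp: field_simps)
  have ev3: "\<forall>\<^sub>F u in at_left 1. U0 x u / (2*(u-x)) * L < 4/3 - \<eta>"
  proof (rule order_tendstoD(2)[OF lim])
    show "k0 * L < 4/3 - \<eta>" unfolding \<eta>_def kL using k0 by argo
  qed
  obtain C where C: "\<And>u. (1+x)/2 < u \<Longrightarrow> u < 1 \<Longrightarrow>
     \<bar>integral {0..\<rho>} (hH x u) - Af x u \<rho> * f1 (x + \<rho>^2*(u-x))\<bar> \<le> C \<and> \<bar>f (x + \<rho>^2*(u-x))\<bar> \<le> C"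
    using H_bnd[OF x(1) x1 rho] by blast
  define Z where "Z = - (2*C/\<eta> + C + 1)"
  have ev1: "\<forall>\<^sub>F u in at_left 1. f u \<le> Z"
    using flim1 unfolding filterlim_at_bot by blast
  have ev2: "\<forall>\<^sub>F u in at_left 1. u \<in> {(1+x)/2<..<1}" by (rule eventually_at_left_real) (use x in auto)
  show ?thesis
  proof (rule eventually_mono[OF eventually_conj[OF ev1 eventually_conj[OF ev2 ev3]]], safe)
    fix u assume fu: "f u \<le> Z" and u: "u \<in> {(1+x)/2<..<1}" and kk: "U0 x u / (2*(u-x)) * L < 4/3 - \<eta>"
    have xu: "x < u" "u < 1" "0 < u" using u x by auto
    have d: "0 < u - x" "u - x \<le> 1" using xu x by auto
    have U: "0 < U0 x u" unfolding U0_def using xu x by auto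
    note dec = H_decomp[OF x(1) x1 xu(1,2) rho]
    have R: "\<eta> * ((f (x + \<rho>^2*(u-x)) - f u)/2) \<le> integral {\<rho>..1} (\<lambda>r. Wf x u r * (- f1 (x + r^2*(u-x))))"
    proof (rule has_integral_le)
      show "((\<lambda>r. Wf x u r * (- f1 (x + r^2*(u-x)))) has_integral integral {\<rho>..1} (\<lambda>r. Wf x u r * (- f1 (x + r^2*(u-x))))) {\<rho>..1}"
      proof (rule integrable_integral, rule integrable_continuous_interval)
        have "continuous_on {\<rho>..1} (\<lambda>r. f1 (x + r^2*(u-x)))"
          by (rule continuous_on_subset[OF cont1[OF C1 xu(3) xu(2) x(1) x1]]) (use rho in auto)
        moreover have "continuous_on {\<rho>..1} (\<lambda>r. Wf x u r)"
          unfolding Wf_def using rho d by (intro continuous_intros) auto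
        ultimately show "continuous_on {\<rho>..1} (\<lambda>r. Wf x u r * (- f1 (x + r^2*(u-x))))"
          by (intro continuous_intros)
      qed
      show "((\<lambda>r. \<eta> * (r*(u-x) * (- f1 (x + r^2*(u-x))))) has_integral \<eta> * ((f (x + \<rho>^2*(u-x)) - f u)/2)) {\<rho>..1}"
        by (rule has_integral_mult_right[OF dec(2)])
    next
      fix r assume r: "r \<in> {\<rho>..1}"
      have rp: "0 < r" "r \<le> 1" "\<rho> \<le> r" using r rho by auto
      have ar: "0 < x + r^2*(u-x)" "x + r^2*(u-x) < 1" using ain[OF x(1) x1 xu(3) xu(2), of r] rp by auto
      have g: "0 < - f1 (x + r^2*(u-x))" using fneg[OF ar] by simp
      have W: "\<eta> \<le> Wf x u r"
      proof -
        have "\<rho>^2 \<le> r^2" using rp rho by (intro power_mono) auto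
        then have "1/r^2 \<le> 1/\<rho>^2" using rho rp by (intro divide_left_mono) auto
        then have "1 + 1/r^2 \<le> L" unfolding L_def rho2 by simp
        then have "U0 x u / (2*(u-x)) * (1 + 1/r^2) \<le> U0 x u / (2*(u-x)) * L"
          using U d by (intro mult_left_mono) auto
        moreover have "U0 x u * (1 + 1/r^2) / (2*(u-x)) = U0 x u / (2*(u-x)) * (1 + 1/r^2)" by simp
        ultimately show ?thesis using kk unfolding Wf_def by linarith
      qed
      have rd: "r*(u-x) \<le> 1" "0 \<le> r*(u-x)" using rp d by (auto simp: mult_le_one)
      have "\<eta> * (r*(u-x) * (- f1 (x + r^2*(u-x)))) \<le> \<eta> * (- f1 (x + r^2*(u-x)))"
      proof -
        have "r*(u-x) * (- f1 (x + r^2*(u-x))) \<le> 1 * (- f1 (x + r^2*(u-x)))"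
          using rd g by (intro mult_right_mono) auto
        then show ?thesis using eta by (intro mult_left_mono) auto
      qed
      also have "\<dots> \<le> Wf x u r * (- f1 (x + r^2*(u-x)))"
        using W g by (intro mult_right_mono) auto
      finally show "\<eta> * (r*(u-x) * (- f1 (x + r^2*(u-x)))) \<le> Wf x u r * (- f1 (x + r^2*(u-x)))" .
    qed
    obtain Cu where Cu: "\<bar>integral {0..\<rho>} (hH x u) - Af x u \<rho> * f1 (x + \<rho>^2*(u-x))\<bar> \<le> C"
      "\<bar>f (x + \<rho>^2*(u-x))\<bar> \<le> C" using C[OF _ xu(2)] u by auto
    have "- C + \<eta> * ((- C - Z)/2) \<le> - C + \<eta> * ((f (x + \<rho>^2*(u-x)) - f u)/2)"
    proof -
      have "(- C - Z)/2 \<le> (f (x + \<rho>^2*(u-x)) - f u)/2" using Cu(2) fu by (intro divide_right_mono) auto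
      then show ?thesis using eta by (simp add: mult_left_mono)
    qed
    also have "\<dots> \<le> H x u" using dec(1) R Cu(1) by linarith
    finally have "- C + \<eta> * ((- C - Z)/2) \<le> H x u" .
    moreover have "- C + \<eta> * ((- C - Z)/2) = \<eta>/2"
      unfolding Z_def using eta by (simp add: field_simps)
    ultimately show "H x u > 0" using eta by linarith
  qed
qed

end


context fs begin

lemma H_strict:
  assumes u: "0<u" "u<1" and I2n: "\<forall>x. 0<x \<and> x<1 \<longrightarrow> I2 x u < 0"
    and ab: "0 < a" "a < b" "b < 1"
  shows "H b u < H a u"
proof (rule DERIV_neg_imp_decreasing[OF ab(2)])
  fix x assume x: "a \<le> x" "x \<le> b"
  have x': "0 < x" "x < 1" using x ab by auto
  show "\<exists>y. ((\<lambda>x. H x u) has_real_derivative y) (at x) \<and> y < 0"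
    using dH[OF x' u] I2n x' U0pos[of x u] u by (intro exI[of _ "U0 x u * I2 x u"]) (auto simp: mult_pos_neg)
qed

lemma unique_zero:
  assumes u: "0<u" "u<1" and I2n: "\<forall>x. 0<x \<and> x<1 \<longrightarrow> I2 x u < 0"
    and eps: "0 < \<epsilon>" "\<epsilon> \<le> 1/8" and Hp: "H (1/4-\<epsilon>) u > 0" and Hn: "H (1/4+\<epsilon>) u < 0"
  defines "c \<equiv> (SOME \<xi>. \<xi> \<in> {0<..<1} \<and> H \<xi> u = 0)"
  shows "c \<in> {0<..<1} \<and> H c u = 0 \<and> (\<forall>\<xi>\<in>{0<..<1}. H \<xi> u = 0 \<longrightarrow> \<xi> = c) \<and> \<bar>c - 1/4\<bar> \<le> \<epsilon>"
proof -
  have cont: "continuous_on {1/4-\<epsilon>..1/4+\<epsilon>} (\<lambda>x. H x u)"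
  proof (rule continuous_at_imp_continuous_on, intro ballI)
    fix x assume "x \<in> {1/4-\<epsilon>..1/4+\<epsilon>}"
    then have x: "0 < x" "x < 1" using eps by auto
    show "isCont (\<lambda>x. H x u) x" by (rule DERIV_isCont[OF dH[OF x u]])
  qed
  obtain z where z: "1/4-\<epsilon> \<le> z" "z \<le> 1/4+\<epsilon>" "H z u = 0"
    using IVT2'[of "\<lambda>x. H x u" "1/4+\<epsilon>" 0 "1/4-\<epsilon>", OF _ _ _ cont] Hp Hn eps by auto
  have z01: "z \<in> {0<..<1}" using z eps by auto
  have uniq: "\<xi> = z" if "\<xi> \<in> {0<..<1}" "H \<xi> u = 0" for \<xi>
  proof (rule ccontr)
    assume "\<xi> \<noteq> z"
    then consider "\<xi> < z" | "z < \<xi>" by linarith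
    then show False
    proof cases
      case 1 then show False using H_strict[OF u I2n, of \<xi> z] that z z01 by auto
    next
      case 2 then show False using H_strict[OF u I2n, of z \<xi>] that z z01 by auto
    qed
  qed
  have cc: "c \<in> {0<..<1} \<and> H c u = 0" unfolding c_def by (rule someI[of _ z]) (use z z01 in auto)
  have cz: "c = z" using uniq[of c] cc by blast
  have ab: "\<bar>z - 1/4\<bar> \<le> \<epsilon>" using z(1,2) by (simp add: abs_le_iff)
  have un: "\<forall>\<xi>\<in>{0<..<1}. H \<xi> u = 0 \<longrightarrow> \<xi> = z" using uniq by blast
  show ?thesis unfolding cz using z01 z(3) un ab by blast
qed

lemma main_loc:
  "\<exists>c :: real \<Rightarrow> real.
           (\<forall>\<^sub>F u1 in at_left 1.
              c u1 \<in> {0<..<1} \<and>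
              ((\<lambda>\<xi>. - F0 f \<xi> u1 / U0 \<xi> u1) has_real_derivative 0) (at (c u1)) \<and>
              (\<forall>\<xi>\<in>{0<..<1}. ((\<lambda>\<xi>. - F0 f \<xi> u1 / U0 \<xi> u1) has_real_derivative 0) (at \<xi>)
                 \<longrightarrow> \<xi> = c u1)) \<and>
           (c \<longlongrightarrow> 1/4) (at_left 1)"
proof -
  define c where "c = (\<lambda>u. SOME \<xi>. \<xi> \<in> {0<..<1} \<and> H \<xi> u = 0)"
  have good: "\<forall>\<^sub>F u in at_left 1. c u \<in> {0<..<1} \<and> H (c u) u = 0 \<and>
       (\<forall>\<xi>\<in>{0<..<1}. H \<xi> u = 0 \<longrightarrow> \<xi> = c u) \<and> \<bar>c u - 1/4\<bar> \<le> \<epsilon>"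
    if eps: "0 < \<epsilon>" "\<epsilon> \<le> 1/8" for \<epsilon>
  proof -
    have e1: "0 < 1/4 - \<epsilon>" "1/4 - \<epsilon> < 1/4" "1/4 < 1/4 + \<epsilon>" "1/4 + \<epsilon> < 1" using eps by auto
    have ev0: "\<forall>\<^sub>F u in at_left 1. u \<in> {0<..<(1::real)}" by (rule eventually_at_left_real) simp
    show ?thesis
    proof (rule eventually_mono[OF eventually_conj[OF ev0 eventually_conj[OF I2_neg
                 eventually_conj[OF H_pos[OF e1(1,2)] H_neg[OF e1(3,4)]]]]])
      fix u assume "u \<in> {0<..<1} \<and> (\<forall>x. 0 < x \<and> x < 1 \<longrightarrow> I2 x u < 0) \<and>
                0 < H (1/4 - \<epsilon>) u \<and> H (1/4 + \<epsilon>) u < 0"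
      then show "c u \<in> {0<..<1} \<and> H (c u) u = 0 \<and>
         (\<forall>\<xi>\<in>{0<..<1}. H \<xi> u = 0 \<longrightarrow> \<xi> = c u) \<and> \<bar>c u - 1/4\<bar> \<le> \<epsilon>"
        unfolding c_def using unique_zero[of u \<epsilon>] eps by auto
    qed
  qed
  have ev0: "\<forall>\<^sub>F u in at_left 1. u \<in> {0<..<(1::real)}" by (rule eventually_at_left_real) simp
  have part1: "\<forall>\<^sub>F u1 in at_left 1.
              c u1 \<in> {0<..<1} \<and>
              ((\<lambda>\<xi>. - F0 f \<xi> u1 / U0 \<xi> u1) has_real_derivative 0) (at (c u1)) \<and>
              (\<forall>\<xi>\<in>{0<..<1}. ((\<lambda>\<xi>. - F0 f \<xi> u1 / U0 \<xi> u1) has_real_derivative 0) (at \<xi>)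
                 \<longrightarrow> \<xi> = c u1)"
  proof (rule eventually_mono[OF eventually_conj[OF ev0 good[of "1/8"]]])
    fix u assume a: "u \<in> {0<..<1} \<and> c u \<in> {0<..<1} \<and> H (c u) u = 0 \<and>
       (\<forall>\<xi>\<in>{0<..<1}. H \<xi> u = 0 \<longrightarrow> \<xi> = c u) \<and> \<bar>c u - 1/4\<bar> \<le> 1/8"
    then have u: "0 < u" "u < 1" and cu: "0 < c u" "c u < 1" by auto
    show "c u \<in> {0<..<1} \<and>
              ((\<lambda>\<xi>. - F0 f \<xi> u / U0 \<xi> u) has_real_derivative 0) (at (c u)) \<and>
              (\<forall>\<xi>\<in>{0<..<1}. ((\<lambda>\<xi>. - F0 f \<xi> u / U0 \<xi> u) has_real_derivative 0) (at \<xi>)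
                 \<longrightarrow> \<xi> = c u)"
    proof (intro conjI ballI impI)
      show "c u \<in> {0<..<1}" using cu by simp
      show "((\<lambda>\<xi>. - F0 f \<xi> u / U0 \<xi> u) has_real_derivative 0) (at (c u))"
        using crit_iff[OF cu u] a by simp
      fix \<xi> :: real assume xi: "\<xi> \<in> {0<..<1}" and d: "((\<lambda>\<xi>. - F0 f \<xi> u / U0 \<xi> u) has_real_derivative 0) (at \<xi>)"
      have "H \<xi> u = 0" using crit_iff[of \<xi> u] xi u d by auto
      then show "\<xi> = c u" using a xi by auto
    qed
  qed (simp_all)
  have part2: "(c \<longlongrightarrow> 1/4) (at_left 1)"
  proof (rule tendstoI)
    fix e :: real assume e: "0 < e"
    have "\<forall>\<^sub>F u in at_left 1. \<bar>c u - 1/4\<bar> \<le> min (e/2) (1/8)"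
    proof -
      have "0 < min (e/2) (1/8)" "min (e/2) (1/8) \<le> (1/8::real)" using e by auto
      from good[OF this] show ?thesis by (rule eventually_mono) blast
    qed
    then show "\<forall>\<^sub>F u in at_left 1. dist (c u) (1/4) < e"
      by (rule eventually_mono) (use e in \<open>auto simp: dist_real_def\<close>)
  qed
  show ?thesis using part1 part2 by blast
qed

end

theorem lemma4p3:
  fixes u0 f :: "real \<Rightarrow> real"
  assumes u0_smooth: "smooth_on UNIV u0"
    and u0_decr: "\<And>x y. x < y \<Longrightarrow> u0 y < u0 x"
    and u0_range: "\<And>x. 0 < u0 x \<and> u0 x < 1"
    and u0_lim_bot: "(u0 \<longlongrightarrow> 1) at_bot"
    and u0_lim_top: "(u0 \<longlongrightarrow> 0) at_top"
    and f_inv1: "\<And>x. f (u0 x) = x"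
    and f_inv2: "\<And>u. 0 < u \<Longrightarrow> u < 1 \<Longrightarrow> u0 (f u) = u"
    and f_smooth: "smooth_on {0<..<1} f"
    and f_deriv_neg: "\<And>u. 0 < u \<Longrightarrow> u < 1 \<Longrightarrow> deriv f u < 0"
    and f_lim0: "filterlim f at_top (at_right 0)"
    and f_lim1: "filterlim f at_bot (at_left 1)"
    and f3_near0: "\<exists>\<delta>>0. \<forall>u. 0 < u \<and> u < \<delta> \<longrightarrow> (deriv ^^ 3) f u < 0"
    and f3_near1: "\<exists>\<delta>>0. \<forall>u. 1 - \<delta> < u \<and> u < 1 \<longrightarrow> (deriv ^^ 3) f u < 0"
  shows "\<exists>c :: real \<Rightarrow> real.
           (\<forall>\<^sub>F u1 in at_left 1.
              c u1 \<in> {0<..<1} \<and>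
              ((\<lambda>\<xi>. - F0 f \<xi> u1 / U0 \<xi> u1) has_real_derivative 0) (at (c u1)) \<and>
              (\<forall>\<xi>\<in>{0<..<1}. ((\<lambda>\<xi>. - F0 f \<xi> u1 / U0 \<xi> u1) has_real_derivative 0) (at \<xi>)
                 \<longrightarrow> \<xi> = c u1)) \<and>
           (c \<longlongrightarrow> 1/4) (at_left 1)"
  proof -
  interpret fs f
    by unfold_locales (use f_smooth f_deriv_neg f_lim1 f3_near0 f3_near1 in auto)
  show ?thesis by (rule main_loc)
qed

end
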